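(* Let $S\subset \mathbb{R}^2$ be such that both $S$ and $S^\mathsf{c}$ satisfy the $r$-rolling condition. Fix $\alpha\in (0,r)$ and $0<t \leq \min\{\alpha, 2\alpha^2/r\}$. There is a constant $A > 0$ depending only on $(r,\alpha)$ such that, for any $z \notin S$ with $0<\alpha -\operatorname{dist}(z, S)\leq t/A$ and any $x_1, x_2 \in \partial B(z, \alpha) \cap S$, we have \[ [x_1 x_2] \subset B(\partial S, t), \qquad \|x_1 -x_2\| \leq \sqrt{t}, \qquad \angle( [x_1 x_2], \partial S ) \leq \sqrt{t}. \]
   Context: A set $T\subset\mathbb{R}^2$ satisfies the $r$-rolling condition ($r>0$) if for every $x \in \partial T$ there is an open ball $B$ of radius $r$ with $B \cap T = \emptyset$ and $x \in \partial B$; when $S$ and $S^\mathsf{c}=\mathbb{R}^2\setminus S$ both satisfy it, $\partial S$ has a tangent line at every point and the metric projection $P_{\partial S}(x)$ (the nearest point of $\partial S$ to $x$) is unique whenever $\operatorname{dist}(x,\partial S)<r$. $B(z,\alpha)$ is the open ball of center $z$ and radius $\alpha$; $B(T,\varepsilon)=\{x:\operatorname{dist}(x,T)<\varepsilon\}$; $[x_1x_2]$ is the closed segment. For a curve $C$ (differentiable almost everywhere) and a curve $D$ with $C\subset B(D,r)$ and unique projections, the deviation angle is $\angle(C,D)=\sup_{x\in C}\angle(\vec C_x,\vec D_{P_D(x)})$, where $\vec C_x$ is the tangent line of $C$ at $x$ and the angle between two lines lies in $[0,\pi/2]$. (For a segment, the tangent is the line containing it.) *)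

theory Defs
  imports "HOL-Analysis.Analysis"
begin

definition rolling :: "(real^2) set \<Rightarrow> real \<Rightarrow> bool" where
  "rolling T r \<longleftrightarrow>
     (\<forall>x \<in> frontier T. \<exists>c. ball c r \<inter> T = {} \<and> x \<in> sphere c r)"

definition line_angle :: "real^2 \<Rightarrow> real^2 \<Rightarrow> real" where
  "line_angle u v = arccos (\<bar>u \<bullet> v\<bar> / (norm u * norm v))"

text \<open>u (nonzero) spans the tangent line of the set C at the point p \<in> C:
  the lines through p and nearby points q of C converge to the line p + span u.\<close>
definition tangent_dir :: "(real^2) set \<Rightarrow> real^2 \<Rightarrow> real^2 \<Rightarrow> bool" where
  "tangent_dir C p u \<longleftrightarrow>
     u \<noteq> 0 \<and> p \<in> C \<and> p islimpt C \<and>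
     ((\<lambda>q. line_angle (q - p) u) \<longlongrightarrow> 0) (at p within C)"

end

theory Submission
  imports Defs
begin




lemma disj_balls:
  fixes a b :: "'a::real_normed_vector"
  assumes "ball a \<rho> \<inter> ball b \<sigma> = {}" "0 < \<rho>" "0 < \<sigma>"
  shows "\<rho> + \<sigma> \<le> dist a b"
proof (rule ccontr)
  assume "\<not> ?thesis"
  hence D: "dist a b < \<rho> + \<sigma>" by simp
  define y where "y = a + (\<rho>/(\<rho>+\<sigma>)) *\<^sub>R (b - a)"
  have "dist a y = \<rho>/(\<rho>+\<sigma>) * dist a b"
    using assms by (simp add: y_def dist_norm norm_minus_commute)
  also have "\<dots> < \<rho>/(\<rho>+\<sigma>) * (\<rho>+\<sigma>)" using D assms by (intro mult_strict_left_mono) auto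
  also have "\<dots> = \<rho>" using assms by simp
  finally have 1: "y \<in> ball a \<rho>" by simp
  have "b - y = (\<sigma>/(\<rho>+\<sigma>)) *\<^sub>R (b - a)"
  proof -
    have "b - y = (1 - \<rho>/(\<rho>+\<sigma>)) *\<^sub>R (b - a)" by (simp add: y_def algebra_simps)
    moreover have "1 - \<rho>/(\<rho>+\<sigma>) = \<sigma>/(\<rho>+\<sigma>)" using assms by (simp add: field_simps)
    ultimately show ?thesis by simp
  qed
  hence "dist b y = \<sigma>/(\<rho>+\<sigma>) * dist a b"
    using assms by (simp add: dist_norm norm_minus_commute)
  also have "\<dots> < \<sigma>/(\<rho>+\<sigma>) * (\<rho>+\<sigma>)" using D assms by (intro mult_strict_left_mono) auto
  also have "\<dots> = \<sigma>" using assms by simp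
  finally have 2: "y \<in> ball b \<sigma>" by simp
  from 1 2 assms(1) show False by blast
qed

lemma parallelogram:
  fixes a b :: "'a::real_inner"
  shows "norm (a+b)^2 + norm (a-b)^2 = 2*norm a^2 + 2*norm b^2"
  unfolding power2_norm_eq_inner by (simp add: algebra_simps inner_commute)

lemma rolling_normal:
  fixes S :: "(real^2) set"
  assumes "rolling S r" "rolling (-S) r" "p \<in> frontier S" "0 < r"
  obtains n where "norm n = 1" "ball (p - r *\<^sub>R n) r \<subseteq> S" "ball (p + r *\<^sub>R n) r \<inter> S = {}"
proof -
  from assms(1,3) obtain c' where c': "ball c' r \<inter> S = {}" "dist c' p = r"
    unfolding rolling_def by auto
  from assms(2,3) obtain c where c: "ball c r \<inter> -S = {}" "dist c p = r"
    unfolding rolling_def by auto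
  have sub: "ball c r \<subseteq> S" using c(1) by blast
  have "2*r \<le> dist c c'" using disj_balls[of c r c' r] sub c'(1) assms(4) by auto
  define n where "n = (1/r) *\<^sub>R (c' - p)"
  have cp: "c' = p + r *\<^sub>R n" using assms(4) by (simp add: n_def)
  have "norm ((c - p) + (c' - p))^2 + norm ((c-p) - (c'-p))^2 = 2*norm (c-p)^2 + 2*norm (c'-p)^2"
    by (rule parallelogram)
  moreover have "norm (c-p) = r" "norm (c'-p) = r" using c c' by (auto simp: dist_norm)
  moreover have "norm ((c-p) - (c'-p)) \<ge> 2*r" using \<open>2*r \<le> dist c c'\<close> by (simp add: dist_norm)
  moreover have "(2*r)^2 \<le> norm ((c-p) - (c'-p))^2"
    using calculation(4) assms(4) by (intro power_mono) auto
  moreover have "(2*r)^2 = 4*r^2" by (simp add: power_mult_distrib)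
  moreover have "norm (c-p)^2 = r^2" "norm (c'-p)^2 = r^2" using calculation(2,3) by simp_all
  ultimately have "norm ((c - p) + (c' - p))^2 \<le> 0" by linarith
  hence "(c - p) + (c' - p) = 0" by simp
  hence cc: "c = p - r *\<^sub>R n" using cp by (simp add: algebra_simps)
  have "norm n = 1" using assms(4) c'(2) by (simp add: n_def dist_norm norm_minus_commute)
  show ?thesis using that[OF \<open>norm n = 1\<close>] sub c'(1) cc cp by simp
qed

lemma normals_close:
  fixes p q np nq :: "'a::real_inner"
  assumes "norm np = 1" "norm nq = 1" "0<r"
   "ball (p - r *\<^sub>R np) r \<subseteq> S" "ball (p + r *\<^sub>R np) r \<inter> S = {}"
   "ball (q - r *\<^sub>R nq) r \<subseteq> S" "ball (q + r *\<^sub>R nq) r \<inter> S = {}"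
  shows "norm (np - nq) \<le> norm (p - q) / r"
proof -
  have d1: "2*r \<le> dist (p - r *\<^sub>R np) (q + r *\<^sub>R nq)"
  proof -
    have "ball (p - r *\<^sub>R np) r \<inter> ball (q + r *\<^sub>R nq) r = {}" using assms(4,7) by blast
    thus ?thesis using disj_balls[of "p - r *\<^sub>R np" r "q + r *\<^sub>R nq" r] assms(3) by simp
  qed
  have d2: "2*r \<le> dist (q - r *\<^sub>R nq) (p + r *\<^sub>R np)"
  proof -
    have "ball (q - r *\<^sub>R nq) r \<inter> ball (p + r *\<^sub>R np) r = {}" using assms(5,6) by blast
    thus ?thesis using disj_balls[of "q - r *\<^sub>R nq" r "p + r *\<^sub>R np" r] assms(3) by simp
  qed
  define D where "D = p - q"
  define N where "N = np + nq"
  have "p - r *\<^sub>R np - (q + r *\<^sub>R nq) = D - r *\<^sub>R N"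
    by (simp add: D_def N_def algebra_simps)
  hence e1: "dist (p - r *\<^sub>R np) (q + r *\<^sub>R nq) = norm (D - r *\<^sub>R N)"
    by (simp add: dist_norm)
  have "p + r *\<^sub>R np - (q - r *\<^sub>R nq) = D + r *\<^sub>R N"
    by (simp add: D_def N_def algebra_simps)
  hence e2: "dist (q - r *\<^sub>R nq) (p + r *\<^sub>R np) = norm (D + r *\<^sub>R N)"
    by (metis dist_commute dist_norm)
  have s1: "(2*r)^2 \<le> norm (D - r *\<^sub>R N)^2" using d1 e1 assms(3) by (intro power_mono) auto
  have s2: "(2*r)^2 \<le> norm (D + r *\<^sub>R N)^2" using d2 e2 assms(3) by (intro power_mono) auto
  have par: "norm (D + r *\<^sub>R N)^2 + norm (D - r *\<^sub>R N)^2 = 2*norm D^2 + 2*r^2*norm N^2"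
    using parallelogram[of D "r *\<^sub>R N"] by (simp add: power_mult_distrib)
  have par2: "norm N^2 + norm (np - nq)^2 = 4"
    using parallelogram[of np nq] assms(1,2) by (simp add: N_def)
  have "norm N^2 = 4 - norm (np - nq)^2" using par2 by linarith
  hence "r^2 * norm N^2 = r^2 * (4 - norm (np - nq)^2)" by simp
  also have "\<dots> = 4*r^2 - r^2 * norm (np - nq)^2" by (simp add: right_diff_distrib)
  finally have "r^2 * norm N^2 = 4*r^2 - r^2 * norm (np - nq)^2" .
  moreover have "(2*r)^2 = 4*r^2" by (simp add: power_mult_distrib)
  ultimately have "r^2 * norm (np - nq)^2 \<le> norm D^2"
    using s1 s2 par by linarith
  hence "(r * norm (np - nq))^2 \<le> norm D^2" by (simp add: power_mult_distrib)
  hence "r * norm (np - nq) \<le> norm D" by (rule power2_le_imp_le[OF _ norm_ge_zero])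
  thus ?thesis using assms(3) by (simp add: D_def field_simps)
qed


lemma norm_add_scaled_sq:
  fixes h n :: "'a::real_inner"
  assumes "norm n = 1"
  shows "norm (h + a *\<^sub>R n)^2 = norm h^2 + 2*a*(h \<bullet> n) + a^2"
proof -
  have nn: "n \<bullet> n = 1" using assms by (simp add: power2_norm_eq_inner[symmetric])
  show ?thesis unfolding power2_norm_eq_inner
    by (simp add: inner_add_left inner_add_right inner_commute nn power2_eq_square algebra_simps)
qed

lemma frontier_notin_ball_sub:
  assumes "ball c r \<subseteq> S" "y \<in> frontier S" shows "y \<notin> ball c r"
proof -
  have "ball c r \<subseteq> interior S" using assms(1) by (simp add: interior_maximal)
  thus ?thesis using assms(2) by (auto simp: frontier_def)
qed

lemma frontier_notin_ball_disj:
  assumes "ball c r \<inter> S = {}" "y \<in> frontier S" shows "y \<notin> ball c r"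
proof -
  have "ball c r \<inter> closure S = {}" using assms(1) by (simp add: open_Int_closure_eq_empty)
  thus ?thesis using assms(2) by (auto simp: frontier_def)
qed

lemma frontier_flat:
  fixes p n y :: "'a::real_inner"
  assumes "norm n = 1" "0 < r" "ball (p - r *\<^sub>R n) r \<subseteq> S" "ball (p + r *\<^sub>R n) r \<inter> S = {}"
    "y \<in> frontier S"
  shows "2 * r * \<bar>(y - p) \<bullet> n\<bar> \<le> norm (y - p)^2"
proof -
  have "y \<notin> ball (p - r *\<^sub>R n) r" using frontier_notin_ball_sub assms(3,5) by blast
  hence "r \<le> norm ((y - p) + r *\<^sub>R n)" by (simp add: dist_norm algebra_simps norm_minus_commute)
  hence "r^2 \<le> norm ((y - p) + r *\<^sub>R n)^2" using assms(2) by (simp add: power_mono)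
  hence 1: "0 \<le> norm (y-p)^2 + 2*r*((y-p) \<bullet> n)" using norm_add_scaled_sq[OF assms(1), of "y-p" r] by simp
  have "y \<notin> ball (p + r *\<^sub>R n) r" using frontier_notin_ball_disj assms(4,5) by blast
  hence "r \<le> norm ((y - p) + (-r) *\<^sub>R n)" by (simp add: dist_norm algebra_simps norm_minus_commute)
  hence "r^2 \<le> norm ((y - p) + (-r) *\<^sub>R n)^2" using assms(2) by (simp add: power_mono)
  hence 2: "0 \<le> norm (y-p)^2 - 2*r*((y-p) \<bullet> n)" using norm_add_scaled_sq[OF assms(1), of "y-p" "-r"] by simp
  show ?thesis using 1 2 by (cases "(y - p) \<bullet> n \<ge> 0") auto
qed



lemma perp2:
  fixes u n v :: "real^2"
  assumes "norm n = 1" "u \<noteq> 0" "u \<bullet> n = 0"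
  shows "(v \<bullet> u)^2 + (norm u * (v \<bullet> n))^2 = (norm v * norm u)^2"
proof -
  have ip: "\<And>x y :: real^2. x \<bullet> y = x$1*y$1 + x$2*y$2" by (simp add: inner_vec_def sum_2)
  have nq: "\<And>x :: real^2. norm x ^2 = x$1^2 + x$2^2" unfolding power2_norm_eq_inner ip by (simp add: power2_eq_square)
  define u1 u2 n1 n2 v1 v2 where "u1 = u$1" "u2 = u$2" "n1 = n$1" "n2 = n$2" "v1 = v$1" "v2 = v$2"
  have N: "n1^2 + n2^2 = 1" using nq[of n] assms(1) by (simp add: u1_u2_n1_n2_v1_v2_def)
  have O: "u1*n1 + u2*n2 = 0" using assms(3) by (simp add: ip u1_u2_n1_n2_v1_v2_def)
  have U: "u1^2 + u2^2 \<noteq> 0"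
  proof
    assume "u1^2 + u2^2 = 0"
    hence "u1 = 0" "u2 = 0" by (simp_all add: sum_power2_eq_zero_iff)
    hence "u = 0" by (simp add: u1_u2_n1_n2_v1_v2_def vec_eq_iff forall_2)
    thus False using assms(2) by simp
  qed
  have key: "(v1*u1+v2*u2)^2 + (u1^2+u2^2)*(v1*n1+v2*n2)^2 = (v1^2+v2^2)*(u1^2+u2^2)"
    using N O U by algebra
  show ?thesis using key
    by (simp add: power_mult_distrib nq ip u1_u2_n1_n2_v1_v2_def)
qed



lemma sin_taylor3: "\<bar>sin (x::real) - x\<bar> \<le> \<bar>x\<bar>^3 / 6"
proof -
  have 1: "\<bar>sin x - (\<Sum>m<3. sin_coeff m * x ^ m)\<bar> \<le> inverse (fact 3) * \<bar>x\<bar> ^ 3"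
    by (rule Maclaurin_sin_bound)
  have "{..<3::nat} = {0,1,2}" by auto
  moreover have "sin_coeff 1 = 1" by (simp add: sin_coeff_def)
  moreover have "sin_coeff 2 = 0" unfolding sin_coeff_def by simp
  ultimately have 2: "(\<Sum>m<3. sin_coeff m * x ^ m) = x" by simp
  have "fact 3 = (6::real)" by (simp add: numeral_3_eq_3)
  hence 3: "inverse (fact 3) * \<bar>x\<bar> ^ 3 = \<bar>x\<bar>^3 / 6" by simp
  show ?thesis using 1 2 3 by simp
qed
lemma sin_ge_quarter:
  assumes "0 < \<theta>" "\<theta> < pi/2" shows "\<theta>/4 \<le> sin \<theta>"
proof (cases "\<theta> \<le> 1")
  case True
  have "\<theta>^2 \<le> 1" using True assms(1) by (simp add: power_le_one)
  hence "\<theta> * \<theta>^2 \<le> \<theta> * 1" using assms(1) by (simp add: mult_left_mono)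
  hence "\<theta>^3 \<le> \<theta>" by (simp add: power3_eq_cube power2_eq_square)
  moreover have "\<bar>sin \<theta> - \<theta>\<bar> \<le> \<theta>^3 / 6" using sin_taylor3[of \<theta>] assms(1) by simp
  ultimately show ?thesis by linarith
next
  case False
  have "sin 1 \<le> sin \<theta>" using False assms by (subst sin_mono_le_eq) auto
  moreover have "\<bar>sin 1 - 1\<bar> \<le> (1::real) / 6" using sin_taylor3[of 1] by simp
  moreover have "\<theta>/4 < 1/2" using assms pi_less_4 by simp
  ultimately show ?thesis by linarith
qed

lemma trig_final:
  assumes "0 \<le> c" "c^2 + s^2 = 1" "0 \<le> s" "s \<le> \<theta>/4" "0 < \<theta>"
  shows "arccos c \<le> \<theta>"
proof -
  have "c^2 \<le> 1" using assms(2) zero_le_power2[of s] by linarith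
  hence c1: "c \<le> 1" using power2_le_imp_le[of c 1] by simp
  show ?thesis
  proof (cases "\<theta> \<ge> pi/2")
    case True thus ?thesis using arccos_le_pi2[OF assms(1) c1] by linarith
  next
    case False
    hence th: "\<theta> < pi/2" by simp
    have "s \<le> sin \<theta>" using sin_ge_quarter[OF assms(5) th] assms(4) by linarith
    hence "s^2 \<le> sin \<theta>^2" using assms(3) by (simp add: power_mono)
    hence "cos \<theta>^2 \<le> c^2" using assms(2) sin_cos_squared_add[of \<theta>] by linarith
    moreover have "0 \<le> cos \<theta>" using assms(5) th by (simp add: cos_ge_zero)
    ultimately have "cos \<theta> \<le> c" using power2_le_imp_le[of "cos \<theta>" c] assms(1) by simp
    hence "arccos c \<le> arccos (cos \<theta>)" using c1 assms(1) cos_ge_minus_one[of \<theta>] cos_le_one[of \<theta>]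
      by (subst arccos_le_mono) auto
    also have "\<dots> = \<theta>" using assms(5) th by (simp add: arccos_cos)
    finally show ?thesis .
  qed
qed

lemma unit_proj:
  fixes a b n :: "'a::real_inner"
  assumes "norm a = 1" "norm b = 1" "norm n = 1"
  shows "\<bar>a \<bullet> b\<bar> * \<bar>b \<bullet> n\<bar> \<le> \<bar>a \<bullet> n\<bar> + sqrt (1 - (a \<bullet> b)^2)"
proof -
  define w where "w = a - (a \<bullet> b) *\<^sub>R b"
  have aa: "a \<bullet> a = 1" using assms(1) by (simp add: power2_norm_eq_inner[symmetric])
  have bb: "b \<bullet> b = 1" using assms(2) by (simp add: power2_norm_eq_inner[symmetric])
  have "norm w ^2 = w \<bullet> w" by (simp add: power2_norm_eq_inner)
  also have "\<dots> = a \<bullet> a - 2 * (a \<bullet> b) * (a \<bullet> b) + (a \<bullet> b) * (a \<bullet> b) * (b \<bullet> b)"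
    unfolding w_def by (simp add: inner_diff_left inner_diff_right inner_commute algebra_simps)
  also have "\<dots> = 1 - (a \<bullet> b)^2" using aa bb by (simp add: power2_eq_square)
  finally have nw: "norm w = sqrt (1 - (a \<bullet> b)^2)" by (metis norm_ge_zero real_sqrt_abs abs_of_nonneg)
  have "\<bar>w \<bullet> n\<bar> \<le> norm w * norm n" by (rule Cauchy_Schwarz_ineq2)
  hence wn: "\<bar>w \<bullet> n\<bar> \<le> norm w" using assms(3) by simp
  have "w \<bullet> n = a \<bullet> n - (a \<bullet> b) * (b \<bullet> n)" unfolding w_def by (simp add: inner_diff_left)
  hence "\<bar>(a \<bullet> b) * (b \<bullet> n)\<bar> \<le> \<bar>a \<bullet> n\<bar> + \<bar>w \<bullet> n\<bar>" by linarith
  thus ?thesis using wn nw by (simp add: abs_mult)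
qed

lemma tangent_perp:
  fixes S :: "(real^2) set"
  assumes "norm n = 1" "0 < r" "ball (p - r *\<^sub>R n) r \<subseteq> S" "ball (p + r *\<^sub>R n) r \<inter> S = {}"
    "tangent_dir (frontier S) p u"
  shows "u \<bullet> n = 0"
proof (rule ccontr)
  assume un: "u \<bullet> n \<noteq> 0"
  from assms(5) have u0: "u \<noteq> 0" and lp: "p islimpt frontier S"
    and tend: "((\<lambda>q. line_angle (q - p) u) \<longlongrightarrow> 0) (at p within frontier S)"
    unfolding tangent_dir_def by auto
  define b where "b = (1 / norm u) *\<^sub>R u"
  have nb: "norm b = 1" using u0 by (simp add: b_def)
  define \<gamma> where "\<gamma> = \<bar>b \<bullet> n\<bar>"
  have g0: "0 < \<gamma>" using un u0 by (simp add: \<gamma>_def b_def)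
  have g1: "\<gamma> \<le> 1" using Cauchy_Schwarz_ineq2[of b n] nb assms(1) by (simp add: \<gamma>_def)
  define c0 where "c0 = 1 - \<gamma>^2/32"
  have "\<gamma>^2 \<le> 1" using g0 g1 by (simp add: power_le_one)
  hence c0b: "31/32 \<le> c0" "c0 < 1" using g0 by (auto simp: c0_def)
  have "arccos 1 < arccos c0" using c0b by (subst arccos_less_mono) auto
  hence d0: "0 < arccos c0" by simp
  have ev1: "eventually (\<lambda>q. line_angle (q - p) u < arccos c0) (at p within frontier S)"
    using order_tendstoD(2)[OF tend d0] .
  have ev2: "eventually (\<lambda>q. q \<in> frontier S \<and> q \<noteq> p \<and> dist q p < r * \<gamma> / 2) (at p within frontier S)"
    unfolding eventually_at using assms(2) g0 by (intro exI[of _ "r * \<gamma> / 2"]) auto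
  have nt: "at p within frontier S \<noteq> bot" using lp trivial_limit_within by blast
  obtain y where y: "line_angle (y - p) u < arccos c0" "y \<in> frontier S" "y \<noteq> p" "dist y p < r * \<gamma> / 2"
    using eventually_happens'[OF nt eventually_conj[OF ev1 ev2]] by blast
  define h where "h = y - p"
  have h0: "h \<noteq> 0" using y(3) by (simp add: h_def)
  define a where "a = (1 / norm h) *\<^sub>R h"
  have na: "norm a = 1" using h0 by (simp add: a_def)
  have ab: "a \<bullet> b = (h \<bullet> u) / (norm h * norm u)" by (simp add: a_def b_def)
  define c where "c = \<bar>a \<bullet> b\<bar>"
  have la: "line_angle h u = arccos c" unfolding line_angle_def c_def ab by (simp add: abs_mult)
  have c1: "c \<le> 1" using Cauchy_Schwarz_ineq2[of a b] na nb by (simp add: c_def)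
  have c00: "0 \<le> c" by (simp add: c_def)
  have "arccos c < arccos c0" using y(1) la by (simp add: h_def)
  hence cc0: "c0 < c" using c1 c00 c0b by (subst (asm) arccos_less_mono) auto
  have "2 * r * \<bar>h \<bullet> n\<bar> \<le> norm h ^2"
    using frontier_flat[OF assms(1-4) y(2)] by (simp add: h_def)
  hence "2 * r * (\<bar>h \<bullet> n\<bar> / norm h) \<le> norm h" using h0 by (simp add: power2_eq_square field_simps)
  moreover have "\<bar>a \<bullet> n\<bar> = \<bar>h \<bullet> n\<bar> / norm h" by (simp add: a_def)
  ultimately have "2 * r * \<bar>a \<bullet> n\<bar> \<le> norm h" by simp
  moreover have "norm h < r * \<gamma> / 2" using y(4) by (simp add: h_def dist_norm)
  ultimately have "2 * r * \<bar>a \<bullet> n\<bar> < r * \<gamma> / 2" by linarith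
  hence an: "\<bar>a \<bullet> n\<bar> < \<gamma> / 4" using assms(2) by (simp add: field_simps)
  have e: "2 * (1 - c) - (1 - c^2) = (1-c)^2" by (simp add: power2_eq_square algebra_simps)
  have "0 \<le> 2 * (1 - c) - (1 - c^2)" unfolding e by simp
  hence "1 - c^2 \<le> 2 * (1 - c)" by simp
  also have "\<dots> < \<gamma>^2/16" using cc0 by (simp add: c0_def)
  finally have "1 - c^2 < (\<gamma>/4)^2" by (simp add: power_divide)
  hence "sqrt (1 - c^2) < \<gamma>/4" using g0 by (metis abs_of_pos divide_pos_pos real_sqrt_abs real_sqrt_less_mono zero_less_numeral)
  moreover have "c * \<gamma> \<le> \<bar>a \<bullet> n\<bar> + sqrt (1 - c^2)"
    using unit_proj[OF na nb assms(1)] by (simp add: c_def \<gamma>_def)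
  ultimately have "c * \<gamma> < \<gamma> / 2" using an by linarith
  moreover have "31/32 * \<gamma> \<le> c * \<gamma>" using cc0 c0b g0 by (simp add: mult_right_mono)
  ultimately show False using g0 by linarith
qed

lemma scal1:
  fixes W P d r \<alpha> :: real
  assumes "0 \<le> W" "2*r*P \<le> W" "W - 2*d*P + d^2 = \<alpha>^2" "\<alpha>/2 \<le> d" "d < \<alpha>" "\<alpha> < r" "0 < \<alpha>"
  shows "W \<le> (2*r*\<alpha>/(r-\<alpha>))*(\<alpha>-d)" "\<bar>P\<bar> \<le> ((2*r*\<alpha>/(r-\<alpha>)) + 2*\<alpha>)/\<alpha>*(\<alpha>-d)"
proof -
  have d0: "0 < d" using assms by linarith
  have dP: "2*d*P = W + d^2 - \<alpha>^2" using assms(3) by linarith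
  have "d*(2*r*P) \<le> d*W" using assms(2) d0 by (simp add: mult_left_mono)
  moreover have "d*(2*r*P) = r*(2*d*P)" by simp
  ultimately have "r*(W + d^2 - \<alpha>^2) \<le> d*W" using dP by simp
  hence "(r-d)*W \<le> r*(\<alpha>^2 - d^2)" by (simp add: algebra_simps)
  moreover have "\<alpha>^2 - d^2 = (\<alpha>-d)*(\<alpha>+d)" by (simp add: power2_eq_square algebra_simps)
  moreover have "(\<alpha>-d)*(\<alpha>+d) \<le> (\<alpha>-d)*(2*\<alpha>)" using assms by (simp add: mult_left_mono)
  ultimately have "(r-d)*W \<le> r*((\<alpha>-d)*(2*\<alpha>))" using assms by (smt (verit) mult_left_mono)
  hence "W \<le> r*((\<alpha>-d)*(2*\<alpha>)) / (r-d)" using assms by (simp add: pos_le_divide_eq mult.commute)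
  also have "\<dots> \<le> r*((\<alpha>-d)*(2*\<alpha>)) / (r-\<alpha>)"
    using assms by (intro divide_left_mono) (auto intro!: mult_nonneg_nonneg)
  also have "\<dots> = (2*r*\<alpha>/(r-\<alpha>))*(\<alpha>-d)" by (simp add: field_simps)
  finally show W: "W \<le> (2*r*\<alpha>/(r-\<alpha>))*(\<alpha>-d)" .
  have a2: "\<alpha>^2 - d^2 \<le> 2*\<alpha>*(\<alpha>-d)" using \<open>\<alpha>^2 - d^2 = (\<alpha>-d)*(\<alpha>+d)\<close> \<open>(\<alpha>-d)*(\<alpha>+d) \<le> (\<alpha>-d)*(2*\<alpha>)\<close>
    by (simp add: algebra_simps)
  have a3: "0 \<le> \<alpha>^2 - d^2" using \<open>\<alpha>^2 - d^2 = (\<alpha>-d)*(\<alpha>+d)\<close> assms d0 by simp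
  have "\<bar>2*d*P\<bar> \<le> W + (\<alpha>^2 - d^2)" using dP assms(1) a3 by linarith
  hence "2*d*\<bar>P\<bar> \<le> (2*r*\<alpha>/(r-\<alpha>))*(\<alpha>-d) + 2*\<alpha>*(\<alpha>-d)" using W a2 d0 by (simp add: abs_mult)
  moreover have "\<alpha>*\<bar>P\<bar> \<le> 2*d*\<bar>P\<bar>" using assms by (simp add: mult_right_mono)
  ultimately have "\<alpha>*\<bar>P\<bar> \<le> ((2*r*\<alpha>/(r-\<alpha>)) + 2*\<alpha>)*(\<alpha>-d)" by (simp add: algebra_simps)
  thus "\<bar>P\<bar> \<le> ((2*r*\<alpha>/(r-\<alpha>)) + 2*\<alpha>)/\<alpha>*(\<alpha>-d)" using assms(7)
    by (simp add: field_simps)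
qed

lemma frontier_near:
  fixes x c :: "'a::euclidean_space"
  assumes "0 < r" "dist x c \<le> r + \<delta>" "(x \<in> S \<and> ball c r \<inter> S = {}) \<or> (x \<notin> S \<and> ball c r \<subseteq> S)"
  shows "infdist x (frontier S) \<le> \<delta>"
proof -
  have cb: "c \<in> ball c r" using assms(1) by simp
  have "closed_segment x c \<inter> frontier S \<noteq> {}"
  proof (rule connected_Int_frontier)
    show "connected (closed_segment x c)" by simp
    show "closed_segment x c \<inter> S \<noteq> {}" using assms(3) cb ends_in_segment[of x c] by blast
    show "closed_segment x c - S \<noteq> {}" using assms(3) cb ends_in_segment[of x c] by blast
  qed
  then obtain p where p: "p \<in> closed_segment x c" "p \<in> frontier S" by blast
  have "p \<notin> ball c r" using assms(3) p(2) frontier_notin_ball_sub frontier_notin_ball_disj by metis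
  hence "r \<le> dist p c" by (simp add: dist_commute)
  moreover have "dist x c = dist x p + dist p c" using p(1) between[of x c p] between_mem_segment[of x c p] by blast
  ultimately have "dist x p \<le> \<delta>" using assms(2) by linarith
  thus ?thesis using infdist_le[OF p(2), of x] by linarith
qed

lemma point_est:
  fixes e w :: "'a::real_inner"
  assumes "norm e = 1" "r \<le> norm (w - r *\<^sub>R e)" "norm (w - d *\<^sub>R e) = \<alpha>"
    "\<alpha>/2 \<le> d" "d < \<alpha>" "\<alpha> < r" "0 < \<alpha>"
  shows "norm w^2 \<le> (2*r*\<alpha>/(r-\<alpha>))*(\<alpha>-d)"
    "\<bar>w \<bullet> e\<bar> \<le> ((2*r*\<alpha>/(r-\<alpha>)) + 2*\<alpha>)/\<alpha>*(\<alpha>-d)"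
    "2*d*(w \<bullet> e) = norm w^2 + d^2 - \<alpha>^2"
proof -
  have r0: "0 < r" using assms by linarith
  have "w - r *\<^sub>R e = w + (-r) *\<^sub>R e" by simp
  hence "norm (w - r *\<^sub>R e)^2 = norm w^2 - 2*r*(w \<bullet> e) + r^2"
    using norm_add_scaled_sq[OF assms(1), of w "-r"] by simp
  moreover have "r^2 \<le> norm (w - r *\<^sub>R e)^2" using assms(2) r0 by (simp add: power_mono)
  ultimately have 1: "2*r*(w \<bullet> e) \<le> norm w^2" by linarith
  have "w - d *\<^sub>R e = w + (-d) *\<^sub>R e" by simp
  hence "norm (w - d *\<^sub>R e)^2 = norm w^2 - 2*d*(w \<bullet> e) + d^2"
    using norm_add_scaled_sq[OF assms(1), of w "-d"] by simp
  hence 2: "norm w^2 - 2*d*(w \<bullet> e) + d^2 = \<alpha>^2" using assms(3) by simp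
  show "norm w^2 \<le> (2*r*\<alpha>/(r-\<alpha>))*(\<alpha>-d)"
    "\<bar>w \<bullet> e\<bar> \<le> ((2*r*\<alpha>/(r-\<alpha>)) + 2*\<alpha>)/\<alpha>*(\<alpha>-d)"
    using scal1[OF _ 1 2 assms(4-7)] by simp_all
  show "2*d*(w \<bullet> e) = norm w^2 + d^2 - \<alpha>^2" using 2 by linarith
qed

lemma seg_convex:
  fixes x1 x2 q e :: "'a::real_inner"
  assumes "x \<in> closed_segment x1 x2" "norm (x1 - q) \<le> B" "norm (x2 - q) \<le> B"
    "\<bar>(x1 - q) \<bullet> e\<bar> \<le> Q" "\<bar>(x2 - q) \<bullet> e\<bar> \<le> Q"
  shows "norm (x - q) \<le> B" "\<bar>(x - q) \<bullet> e\<bar> \<le> Q"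
proof -
  obtain u where u: "0 \<le> u" "u \<le> 1" "x = (1 - u) *\<^sub>R x1 + u *\<^sub>R x2"
    using assms(1) unfolding closed_segment_def by blast
  have xq: "x - q = (1 - u) *\<^sub>R (x1 - q) + u *\<^sub>R (x2 - q)"
    using u(3) by (simp add: algebra_simps)
  have "norm (x - q) \<le> norm ((1 - u) *\<^sub>R (x1 - q)) + norm (u *\<^sub>R (x2 - q))"
    unfolding xq by (rule norm_triangle_ineq)
  also have "\<dots> = (1 - u) * norm (x1 - q) + u * norm (x2 - q)" using u by simp
  also have "\<dots> \<le> B" using u assms(2,3) by (intro convex_bound_le) auto
  finally show "norm (x - q) \<le> B" .
  have "(x - q) \<bullet> e = (1 - u) * ((x1 - q) \<bullet> e) + u * ((x2 - q) \<bullet> e)"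
    unfolding xq by (simp add: inner_add_left)
  hence "\<bar>(x - q) \<bullet> e\<bar> \<le> (1 - u) * \<bar>(x1 - q) \<bullet> e\<bar> + u * \<bar>(x2 - q) \<bullet> e\<bar>"
    using u abs_triangle_ineq[of "(1 - u) * ((x1 - q) \<bullet> e)" "u * ((x2 - q) \<bullet> e)"]
    by (simp add: abs_mult)
  also have "\<dots> \<le> Q" using u assms(4,5) by (intro convex_bound_le) auto
  finally show "\<bar>(x - q) \<bullet> e\<bar> \<le> Q" .
qed


theorem lemma5:
  fixes r \<alpha> :: real
  assumes "0 < \<alpha>" and "\<alpha> < r"
  shows "\<exists>A>0. \<forall>(S :: (real^2) set) t z x1 x2.
     rolling S r \<and> rolling (- S) r \<and>
     0 < t \<and> t \<le> min \<alpha> (2 * \<alpha>\<^sup>2 / r) \<and>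
     z \<notin> S \<and> 0 < \<alpha> - infdist z S \<and> \<alpha> - infdist z S \<le> t / A \<and>
     x1 \<in> sphere z \<alpha> \<inter> S \<and> x2 \<in> sphere z \<alpha> \<inter> S
     \<longrightarrow>
       (\<forall>x \<in> closed_segment x1 x2. infdist x (frontier S) < t) \<and>
       norm (x1 - x2) \<le> sqrt t \<and>
       (x1 \<noteq> x2 \<longrightarrow>
          (\<forall>x \<in> closed_segment x1 x2. \<forall>p u.
             p \<in> frontier S \<and> dist x p = infdist x (frontier S) \<and>
             tangent_dir (frontier S) p u
             \<longrightarrow> line_angle (x2 - x1) u \<le> sqrt t))"
proof -
  have r0: "0 < r" using assms by linarith
  define K2 where "K2 = 2*r*\<alpha>/(r-\<alpha>)"
  define M where "M = (K2 + 2*\<alpha>)/\<alpha>"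
  define C where "C = (K2 + 2*r*M)/r"
  define G where "G = 2* sqrt K2/\<alpha> + (sqrt K2 + C* sqrt \<alpha>)/r"
  define A where "A = 2 + C + 4*K2 + 16*G^2"
  have K2p: "0 < K2" using assms by (simp add: K2_def)
  have Mp: "0 < M" using assms K2p by (simp add: M_def)
  have "0 < K2 + 2*r*M" using r0 K2p Mp by (simp add: add_pos_pos)
  hence Cp: "0 < C" using r0 unfolding C_def by (rule divide_pos_pos)
  have Gp: "0 < G" using assms K2p Cp r0 by (simp add: G_def add_pos_pos)
  have G2: "0 \<le> G^2" by simp
  have A2: "2 \<le> A" "C < A" "4*K2 \<le> A" "16*G^2 \<le> A"
    unfolding A_def using Cp K2p G2 by linarith+
  have Ap: "0 < A" using A2 by linarith
  have rCe: "r * C = K2 + 2*r*M" using r0 by (simp add: C_def)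
  show ?thesis
  proof (rule exI[of _ A], intro conjI allI impI)
    show "0 < A" by (rule Ap)
    fix S :: "(real^2) set" and t z x1 x2
    assume H: "rolling S r \<and> rolling (- S) r \<and>
     0 < t \<and> t \<le> min \<alpha> (2 * \<alpha>\<^sup>2 / r) \<and>
     z \<notin> S \<and> 0 < \<alpha> - infdist z S \<and> \<alpha> - infdist z S \<le> t / A \<and>
     x1 \<in> sphere z \<alpha> \<inter> S \<and> x2 \<in> sphere z \<alpha> \<inter> S"
    have rS: "rolling S r" and rSc: "rolling (- S) r" and t0: "0 < t" and ta: "t \<le> \<alpha>"
      and x1S: "x1 \<in> S" and x2S: "x2 \<in> S" and x1z: "dist z x1 = \<alpha>" and x2z: "dist z x2 = \<alpha>"
      using H by auto
    define d where "d = infdist z S"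
    define \<epsilon> where "\<epsilon> = \<alpha> - d"
    have e0: "0 < \<epsilon>" and etA: "\<epsilon> \<le> t/A" using H by (simp_all add: \<epsilon>_def d_def)
    have "t/A \<le> \<alpha>/A" using ta Ap by (simp add: divide_right_mono)
    also have "\<alpha>/A \<le> \<alpha>/2" using divide_left_mono[of 2 A \<alpha>] A2(1) assms(1) by simp
    finally have ea: "\<epsilon> \<le> \<alpha>/2" using etA by linarith
    have dlo: "\<alpha>/2 \<le> d" and dhi: "d < \<alpha>" using ea e0 by (simp_all add: \<epsilon>_def)
    have d0: "0 < d" using dlo assms by linarith
    have eal: "\<epsilon> \<le> \<alpha>" using ea assms by linarith
    have "closure S \<noteq> {}" using x1S closure_subset by blast
    then obtain q where q: "q \<in> closure S" "infdist z (closure S) = dist z q"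
      using infdist_attains_inf[of "closure S" z] by blast
    have "infdist z (closure S) = d" by (simp add: d_def infdist_eq_setdist)
    hence dzq: "dist z q = d" using q(2) by simp
    have ballz: "ball z d \<inter> S = {}"
    proof -
      have "y \<notin> ball z d" if "y \<in> S" for y using infdist_le[OF that, of z] by (simp add: d_def)
      thus ?thesis by blast
    qed
    have qfr: "q \<in> frontier S"
    proof -
      have "ball z d \<subseteq> - S" using ballz by blast
      hence "closure (ball z d) \<subseteq> closure (- S)" by (rule closure_mono)
      hence "cball z d \<subseteq> - interior S" using d0 by (simp add: closure_complement)
      moreover have "q \<in> cball z d" using dzq by simp
      ultimately have "q \<notin> interior S" by blast
      thus ?thesis using q(1) by (simp add: frontier_def)
    qed
    obtain e where e: "norm e = 1" "ball (q - r *\<^sub>R e) r \<subseteq> S" "ball (q + r *\<^sub>R e) r \<inter> S = {}"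
      using rolling_normal[OF rS rSc qfr r0] by blast
    have zq: "z - q = d *\<^sub>R e"
    proof -
      define h where "h = z - q"
      have nh: "norm h = d" using dzq by (simp add: h_def dist_norm norm_minus_commute)
      have "ball (q - r *\<^sub>R e) r \<inter> ball z d = {}" using e(2) ballz by blast
      hence "r + d \<le> dist (q - r *\<^sub>R e) z" using disj_balls r0 d0 by blast
      moreover have "dist (q - r *\<^sub>R e) z = norm (h + r *\<^sub>R e)"
      proof -
        have "z - (q - r *\<^sub>R e) = h + r *\<^sub>R e" by (simp add: h_def algebra_simps)
        thus ?thesis by (metis dist_commute dist_norm)
      qed
      ultimately have "(r + d)^2 \<le> norm (h + r *\<^sub>R e)^2" using r0 d0 by (simp add: power_mono)
      hence "(r+d)^2 \<le> d^2 + 2*r*(h \<bullet> e) + r^2" using norm_add_scaled_sq[OF e(1), of h r] nh by simp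
      moreover have "(r+d)^2 = r^2 + 2*r*d + d^2" by (simp add: power2_eq_square algebra_simps)
      ultimately have "2*r*d \<le> 2*r*(h \<bullet> e)" by linarith
      hence he: "d \<le> h \<bullet> e" using r0 by simp
      have "norm (h + (-d) *\<^sub>R e)^2 = d^2 - 2*d*(h \<bullet> e) + d^2"
        using norm_add_scaled_sq[OF e(1), of h "-d"] nh by simp
      also have "\<dots> \<le> 0" using he d0 by (simp add: power2_eq_square mult_left_mono)
      finally have "h + (-d) *\<^sub>R e = 0" by simp
      thus ?thesis by (simp add: h_def algebra_simps)
    qed
    define w1 where "w1 = x1 - q"
    define w2 where "w2 = x2 - q"
    have pe: "norm w^2 \<le> K2*\<epsilon> \<and> \<bar>w \<bullet> e\<bar> \<le> M*\<epsilon> \<and> 2*d*(w \<bullet> e) = norm w^2 + d^2 - \<alpha>^2"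
      if "w = xi - q" "xi \<in> S" "dist z xi = \<alpha>" for w xi
    proof -
      have "xi \<notin> ball (q + r *\<^sub>R e) r" using e(3) that(2) by blast
      hence "r \<le> dist (q + r *\<^sub>R e) xi" by simp
      moreover have "dist (q + r *\<^sub>R e) xi = norm (w - r *\<^sub>R e)"
      proof -
        have "xi - (q + r *\<^sub>R e) = w - r *\<^sub>R e" using that(1) by (simp add: algebra_simps)
        thus ?thesis by (metis dist_commute dist_norm)
      qed
      ultimately have 1: "r \<le> norm (w - r *\<^sub>R e)" by simp
      have "xi - z = w - d *\<^sub>R e" using that(1) zq by (simp add: algebra_simps)
      hence 2: "norm (w - d *\<^sub>R e) = \<alpha>" using that(3) by (metis dist_commute dist_norm)
      show ?thesis using point_est[OF e(1) 1 2 dlo dhi assms(2) assms(1)]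
        by (simp add: K2_def M_def \<epsilon>_def)
    qed
    have p1: "norm w1^2 \<le> K2*\<epsilon>" "\<bar>w1 \<bullet> e\<bar> \<le> M*\<epsilon>" "2*d*(w1 \<bullet> e) = norm w1^2 + d^2 - \<alpha>^2"
      using pe[OF w1_def x1S x1z] by auto
    have p2: "norm w2^2 \<le> K2*\<epsilon>" "\<bar>w2 \<bullet> e\<bar> \<le> M*\<epsilon>" "2*d*(w2 \<bullet> e) = norm w2^2 + d^2 - \<alpha>^2"
      using pe[OF w2_def x2S x2z] by auto
    define B where "B = sqrt (K2*\<epsilon>)"
    have B: "B = sqrt K2 * sqrt \<epsilon>" by (simp add: B_def real_sqrt_mult)
    have K2e: "0 \<le> K2*\<epsilon>" using mult_pos_pos[OF K2p e0] by simp
    hence Bsq: "B^2 = K2*\<epsilon>" by (simp add: B_def)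
    have B0: "0 \<le> B" using K2e by (simp add: B_def)
    have nw1: "norm w1 \<le> B" using p1(1) by (simp add: B_def real_le_rsqrt)
    have nw2: "norm w2 \<le> B" using p2(1) by (simp add: B_def real_le_rsqrt)
    have dfr: "infdist x (frontier S) \<le> C*\<epsilon>" if xs: "x \<in> closed_segment x1 x2" for x
    proof -
      have sx: "norm (x - q) \<le> B" "\<bar>(x - q) \<bullet> e\<bar> \<le> M*\<epsilon>"
        using seg_convex[OF xs, of q B e "M*\<epsilon>"] nw1 nw2 p1(2) p2(2) by (simp_all add: w1_def w2_def)
      have nsq: "norm (x - q)^2 \<le> K2*\<epsilon>" using sx(1) Bsq norm_ge_zero power_mono by metis
      have bnd: "norm (x - q + a *\<^sub>R e) \<le> r + C*\<epsilon>" if "a = r \<or> a = -r" for a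
      proof -
        have "norm (x - q + a *\<^sub>R e)^2 = norm (x - q)^2 + 2*a*((x - q) \<bullet> e) + a^2"
          by (rule norm_add_scaled_sq[OF e(1)])
        moreover have "2*a*((x - q) \<bullet> e) \<le> 2*r*(M*\<epsilon>)"
        proof -
          have "2*a*((x - q) \<bullet> e) \<le> \<bar>2*a*((x - q) \<bullet> e)\<bar>" by simp
          also have "\<dots> = 2*r*\<bar>(x - q) \<bullet> e\<bar>" using that r0 by (auto simp: abs_mult)
          also have "\<dots> \<le> 2*r*(M*\<epsilon>)" using sx(2) r0 by simp
          finally show ?thesis .
        qed
        moreover have "a^2 = r^2" using that by auto
        ultimately have "norm (x - q + a *\<^sub>R e)^2 \<le> r^2 + (K2 + 2*r*M)*\<epsilon>"
          using nsq by (simp add: algebra_simps)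
        also have "\<dots> = r^2 + r*(C*\<epsilon>)" using rCe by simp
        also have "\<dots> \<le> (r + C*\<epsilon>)^2"
        proof -
          have ce: "0 < C*\<epsilon>" using mult_pos_pos[OF Cp e0] .
          have "(r + C*\<epsilon>)^2 = r^2 + 2*(r*(C*\<epsilon>)) + (C*\<epsilon>)^2" by (simp add: power2_eq_square algebra_simps)
          thus ?thesis using mult_pos_pos[OF r0 ce] zero_le_power2[of "C*\<epsilon>"] by linarith
        qed
        finally have sq: "norm (x - q + a *\<^sub>R e)^2 \<le> (r + C*\<epsilon>)^2" .
        have "0 \<le> r + C*\<epsilon>" using mult_pos_pos[OF Cp e0] r0 by linarith
        thus ?thesis by (rule power2_le_imp_le[OF sq])
      qed
      show ?thesis
      proof (cases "x \<in> S")
        case True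
        have "dist x (q + r *\<^sub>R e) = norm (x - q + (-r) *\<^sub>R e)" by (simp add: dist_norm algebra_simps)
        hence "dist x (q + r *\<^sub>R e) \<le> r + C*\<epsilon>" using bnd[of "-r"] by simp
        thus ?thesis using frontier_near[OF r0, of x "q + r *\<^sub>R e"] True e(3) by blast
      next
        case False
        have "dist x (q - r *\<^sub>R e) = norm (x - q + r *\<^sub>R e)" by (simp add: dist_norm algebra_simps)
        hence "dist x (q - r *\<^sub>R e) \<le> r + C*\<epsilon>" using bnd[of r] by simp
        thus ?thesis using frontier_near[OF r0, of x "q - r *\<^sub>R e"] False e(2) by blast
      qed
    qed
    show "\<forall>x\<in>closed_segment x1 x2. infdist x (frontier S) < t"
    proof
      fix x assume "x \<in> closed_segment x1 x2"
      hence "infdist x (frontier S) \<le> C*\<epsilon>" by (rule dfr)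
      also have "C*\<epsilon> \<le> C*(t/A)" using mult_left_mono[OF etA, of C] Cp by simp
      also have "\<dots> = t*(C/A)" by simp
      also have "\<dots> < t*1" by (rule mult_strict_left_mono) (use A2(2) Ap t0 in \<open>simp_all add: field_simps\<close>)
      finally show "infdist x (frontier S) < t" by simp
    qed
    show "norm (x1 - x2) \<le> sqrt t"
    proof -
      have "norm (x1 - x2) = norm (w1 - w2)" by (simp add: w1_def w2_def)
      also have "\<dots> \<le> norm w1 + norm w2" by (rule norm_triangle_ineq4)
      also have "\<dots> \<le> 2*B" using nw1 nw2 by simp
      also have "2*B = sqrt (4*K2*\<epsilon>)" by (simp add: B_def real_sqrt_mult)
      also have "\<dots> \<le> sqrt t"
      proof -
        have "4*K2*\<epsilon> \<le> 4*K2*(t/A)" using mult_left_mono[OF etA, of "4*K2"] K2p by simp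
        also have "\<dots> = t*(4*K2/A)" by simp
        also have "\<dots> \<le> t*1" by (rule mult_left_mono) (use A2(3) Ap t0 in \<open>simp_all add: field_simps\<close>)
        finally show ?thesis by simp
      qed
      finally show ?thesis .
    qed
    show "\<forall>x\<in>closed_segment x1 x2. \<forall>p u. p \<in> frontier S \<and> dist x p = infdist x (frontier S) \<and>
             tangent_dir (frontier S) p u \<longrightarrow> line_angle (x2 - x1) u \<le> sqrt t" if x12: "x1 \<noteq> x2"
    proof (intro ballI allI impI)
    fix x p u
    assume xs: "x \<in> closed_segment x1 x2"
      and P: "p \<in> frontier S \<and> dist x p = infdist x (frontier S) \<and> tangent_dir (frontier S) p u"
    have pfr: "p \<in> frontier S" and dxp: "dist x p = infdist x (frontier S)"
      and tan: "tangent_dir (frontier S) p u" using P by auto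
    obtain np where np: "norm np = 1" "ball (p - r *\<^sub>R np) r \<subseteq> S" "ball (p + r *\<^sub>R np) r \<inter> S = {}"
      using rolling_normal[OF rS rSc pfr r0] by blast
    have un: "u \<bullet> np = 0" by (rule tangent_perp[OF np(1) r0 np(2) np(3) tan])
    have u0: "u \<noteq> 0" using tan by (simp add: tangent_dir_def)
    have ncl: "norm (np - e) \<le> norm (p - q) / r"
      by (rule normals_close[OF np(1) e(1) r0 np(2) np(3) e(2) e(3)])
    have sx: "norm (x - q) \<le> B"
      using seg_convex(1)[OF xs, of q B e "M*\<epsilon>"] nw1 nw2 p1(2) p2(2) by (simp add: w1_def w2_def)
    have "norm (p - q) \<le> norm (x - q) + dist x p"
      using norm_triangle_ineq[of "x - q" "p - x"] by (simp add: dist_norm norm_minus_commute algebra_simps)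
    also have "\<dots> \<le> B + C*\<epsilon>" using sx dfr[OF xs] dxp by simp
    also have "C*\<epsilon> \<le> C* sqrt \<alpha>* sqrt \<epsilon>"
    proof -
      have "\<epsilon> = sqrt \<epsilon> * sqrt \<epsilon>" using e0 by simp
      also have "\<dots> \<le> sqrt \<alpha> * sqrt \<epsilon>"
        by (rule mult_right_mono) (use eal e0 in auto)
      finally show ?thesis using Cp by (simp add: mult.assoc mult_left_mono)
    qed
    finally have pq: "norm (p - q) \<le> (sqrt K2 + C* sqrt \<alpha>) * sqrt \<epsilon>" using B by (simp add: algebra_simps)
    define v where "v = x2 - x1"
    have v0: "v \<noteq> 0" using x12 by (simp add: v_def)
    have nv: "0 < norm v" using v0 by simp
    have vw: "v = w2 - w1" by (simp add: v_def w1_def w2_def)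
    have "2*d*(v \<bullet> e) = norm w2^2 - norm w1^2"
      using p1(3) p2(3) by (simp add: vw inner_diff_left algebra_simps)
    also have "\<dots> = v \<bullet> (w1 + w2)"
      by (simp add: vw power2_norm_eq_inner inner_diff_left inner_diff_right inner_add_left inner_add_right inner_commute)
    finally have ve: "2*d*(v \<bullet> e) = v \<bullet> (w1 + w2)" .
    have "\<bar>v \<bullet> (w1 + w2)\<bar> \<le> norm v * norm (w1 + w2)" by (rule Cauchy_Schwarz_ineq2)
    also have "\<dots> \<le> norm v * (2*B)"
      by (rule mult_left_mono) (use nw1 nw2 norm_triangle_ineq[of w1 w2] in auto)
    finally have "\<alpha> * \<bar>v \<bullet> e\<bar> \<le> norm v * (2*B)"
    proof -
      assume h: "\<bar>v \<bullet> (w1 + w2)\<bar> \<le> norm v * (2*B)"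
      have "\<alpha> * \<bar>v \<bullet> e\<bar> \<le> 2*d*\<bar>v \<bullet> e\<bar>" using dlo by (simp add: mult_right_mono)
      also have "\<dots> = \<bar>v \<bullet> (w1 + w2)\<bar>" using ve d0 by (metis abs_mult abs_of_pos mult_pos_pos zero_less_numeral)
      finally show ?thesis using h by linarith
    qed
    hence vev: "\<bar>v \<bullet> e\<bar> \<le> norm v * (2*B/\<alpha>)" using assms(1) by (simp add: field_simps)
    have "\<bar>v \<bullet> np\<bar> = \<bar>v \<bullet> e + v \<bullet> (np - e)\<bar>" by (simp add: inner_diff_right)
    also have "\<dots> \<le> \<bar>v \<bullet> e\<bar> + \<bar>v \<bullet> (np - e)\<bar>" by (rule abs_triangle_ineq)
    also have "\<bar>v \<bullet> (np - e)\<bar> \<le> norm v * norm (np - e)" by (rule Cauchy_Schwarz_ineq2)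
    also have "norm v * norm (np - e) \<le> norm v * ((sqrt K2 + C* sqrt \<alpha>) * sqrt \<epsilon> / r)"
      by (rule mult_left_mono) (use order_trans[OF ncl divide_right_mono[OF pq, of r]] r0 in auto)
    finally have "\<bar>v \<bullet> np\<bar> \<le> norm v * (2*B/\<alpha>) + norm v * ((sqrt K2 + C* sqrt \<alpha>) * sqrt \<epsilon> / r)"
      using vev by linarith
    also have "\<dots> = norm v * (G * sqrt \<epsilon>)" by (simp add: G_def B algebra_simps add_divide_distrib)
    finally have vnp: "\<bar>v \<bullet> np\<bar> / norm v \<le> G * sqrt \<epsilon>" using nv by (simp add: field_simps)
    have "G * sqrt \<epsilon> \<le> sqrt t / 4"
    proof -
      have "(G * sqrt \<epsilon>)^2 = G^2 * \<epsilon>" using e0 by (simp add: power_mult_distrib)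
      also have "\<dots> \<le> G^2 * (t/A)" using mult_left_mono[OF etA, of "G^2"] by simp
      also have "\<dots> = t * (G^2/A)" by simp
      also have "\<dots> \<le> t * (1/16)" by (rule mult_left_mono) (use A2(4) Ap t0 in \<open>simp_all add: field_simps\<close>)
      also have "\<dots> = (sqrt t / 4)^2" using t0 by (simp add: power_divide)
      finally have sq: "(G * sqrt \<epsilon>)^2 \<le> (sqrt t / 4)^2" .
      have "0 \<le> sqrt t / 4" using t0 by simp
      thus ?thesis by (rule power2_le_imp_le[OF sq])
    qed
    with vnp have sbound: "\<bar>v \<bullet> np\<bar> / norm v \<le> sqrt t / 4" by linarith
    define c where "c = \<bar>v \<bullet> u\<bar> / (norm v * norm u)"
    define s where "s = \<bar>v \<bullet> np\<bar> / norm v"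
    have id: "(v \<bullet> u)^2 + (norm u * (v \<bullet> np))^2 = (norm v * norm u)^2" by (rule perp2[OF np(1) u0 un])
    have "c^2 + s^2 = 1"
    proof -
      have nu: "0 < norm u" using u0 by simp
      have "c^2 + s^2 = ((v \<bullet> u)^2 + (norm u * (v \<bullet> np))^2) / (norm v * norm u)^2"
        using nv nu by (simp add: c_def s_def power_divide power_mult_distrib field_simps)
      also have "\<dots> = 1" using id nv nu by simp
      finally show ?thesis .
    qed
    moreover have "0 \<le> c" "0 \<le> s" by (simp_all add: c_def s_def)
    ultimately have "arccos c \<le> sqrt t" using trig_final[of c s "sqrt t"] sbound t0 by (simp add: s_def)
    thus "line_angle (x2 - x1) u \<le> sqrt t" by (simp add: line_angle_def c_def v_def)
    qed
  qed
qed

end
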